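(* Let $B\in M_2(\mathbb C)$ have rank one. Then the following are equivalent: (i) $E_{11}\perp B$ and every matrix in $E_{11}^\perp\cap B^\perp$ has rank at most one; (ii) $B\in(\mathbb C E_{12}\cup\mathbb C E_{21})\setminus\{0\}$.
   Context: $M_2(\mathbb C)$ carries the operator (spectral) norm; $E_{ij}$ are matrix units. $X\perp Y$ (Birkhoff–James orthogonality) means $\|X+\lambda Y\|\ge\|X\|$ for all $\lambda\in\mathbb C$, and $X^\perp:=\{Y: X\perp Y\}$. *)

theory Defs
  imports "HOL-Analysis.Analysis"
begin

definition opnorm :: "complex^2^2 \<Rightarrow> real" where
  "opnorm A = onorm (\<lambda>x. A *v x)"

definition cmat_scale :: "complex \<Rightarrow> complex^2^2 \<Rightarrow> complex^2^2" where
  "cmat_scale c A = (\<chi> i j. c * A $ i $ j)"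

definition bj_orth :: "complex^2^2 \<Rightarrow> complex^2^2 \<Rightarrow> bool" where
  "bj_orth X Y \<longleftrightarrow> (\<forall>l::complex. opnorm (X + cmat_scale l Y) \<ge> opnorm X)"

definition bj_perp :: "complex^2^2 \<Rightarrow> (complex^2^2) set" where
  "bj_perp X = {Y. bj_orth X Y}"

definition E11 :: "complex^2^2" where
  "E11 = (\<chi> i j. if i = 1 \<and> j = 1 then 1 else 0)"
definition E12 :: "complex^2^2" where
  "E12 = (\<chi> i j. if i = 1 \<and> j = 2 then 1 else 0)"
definition E21 :: "complex^2^2" where
  "E21 = (\<chi> i j. if i = 2 \<and> j = 1 then 1 else 0)"

end

theory Submission
  imports Defs
begin
lemma norm2: "norm (x::complex^2) = sqrt (cmod (x$1)^2 + cmod (x$2)^2)"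
  by (simp add: norm_vec_def L2_set_def sum_2)

lemma mv_comp: "((M::complex^2^2) *v x)$i = M$i$1 * x$1 + M$i$2 * x$2"
  by (simp add: matrix_vector_mult_def sum_2)

lemma cs2_real:
  fixes u1 u2 v1 v2 :: real
  assumes "u1 \<ge> 0" "u2 \<ge> 0" "v1 \<ge> 0" "v2 \<ge> 0"
  shows "u1 * v1 + u2 * v2 \<le> sqrt (u1^2 + u2^2) * sqrt (v1^2 + v2^2)"
proof -
  have "(u1 * v1 + u2 * v2)^2 \<le> (u1^2 + u2^2) * (v1^2 + v2^2)"
  proof -
    have "0 \<le> (u1 * v2 - u2 * v1)^2" by simp
    then show ?thesis by (simp add: power2_eq_square algebra_simps)
  qed
  then have "u1 * v1 + u2 * v2 \<le> sqrt ((u1^2 + u2^2) * (v1^2 + v2^2))"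
    by (rule real_le_rsqrt)
  then show ?thesis by (simp add: real_sqrt_mult)
qed

lemma row_cs: "cmod (a*x + b*y) \<le> sqrt (cmod a^2 + cmod b^2) * sqrt (cmod x^2 + cmod y^2)"
proof -
  have "cmod (a*x + b*y) \<le> cmod a * cmod x + cmod b * cmod y"
    by (metis norm_mult norm_triangle_ineq)
  also have "\<dots> \<le> sqrt (cmod a^2 + cmod b^2) * sqrt (cmod x^2 + cmod y^2)"
    by (rule cs2_real) auto
  finally show ?thesis .
qed

lemma frob_vec:
  fixes M :: "complex^2^2"
  shows "norm (M *v x) \<le> sqrt (cmod (M$1$1)^2 + cmod (M$1$2)^2 + cmod (M$2$1)^2 + cmod (M$2$2)^2) * norm x"
proof -
  define n where "n = norm x"
  have n: "n = sqrt (cmod (x$1)^2 + cmod (x$2)^2)" "n \<ge> 0" using norm2[of x] by (auto simp: n_def)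
  define R1 where "R1 = cmod (M$1$1)^2 + cmod (M$1$2)^2"
  define R2 where "R2 = cmod (M$2$1)^2 + cmod (M$2$2)^2"
  have c1: "cmod ((M *v x)$1) \<le> sqrt R1 * n"
    unfolding mv_comp R1_def n by (rule row_cs)
  have c2: "cmod ((M *v x)$2) \<le> sqrt R2 * n"
    unfolding mv_comp R2_def n by (rule row_cs)
  have "cmod ((M *v x)$1)^2 \<le> (sqrt R1 * n)^2"
    using c1 by (intro power_mono) auto
  moreover have "cmod ((M *v x)$2)^2 \<le> (sqrt R2 * n)^2"
    using c2 by (intro power_mono) auto
  ultimately have "cmod ((M *v x)$1)^2 + cmod ((M *v x)$2)^2 \<le> (R1 + R2) * n^2"
    by (simp add: power_mult_distrib R1_def R2_def algebra_simps)
  then have "norm (M *v x) \<le> sqrt ((R1 + R2) * n^2)"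
    unfolding norm2 by (simp)
  also have "\<dots> = sqrt (R1 + R2) * n" using n by (simp add: real_sqrt_mult)
  finally show ?thesis by (simp add: R1_def R2_def n_def add.assoc)
qed

lemma frob:
  fixes M :: "complex^2^2"
  shows "opnorm M \<le> sqrt (cmod (M$1$1)^2 + cmod (M$1$2)^2 + cmod (M$2$1)^2 + cmod (M$2$2)^2)"
  unfolding opnorm_def by (rule onorm_le) (rule frob_vec)

lemma opnorm_lower:
  fixes M :: "complex^2^2"
  shows "norm (M *v x) \<le> opnorm M * norm x"
  unfolding opnorm_def by (rule onorm) simp

lemma opnorm_lower_comp:
  fixes M :: "complex^2^2"
  shows "cmod ((M *v x)$i) \<le> opnorm M * norm x"
  using opnorm_lower[of M x] Finite_Cartesian_Product.norm_nth_le[where x="M *v x" and i=i] by linarith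

lemma core:
  fixes a x :: complex and R :: real
  assumes "a \<noteq> 0" "x \<noteq> 0" "R \<ge> 0"
  shows "\<exists>l. cmod (a + l*x)^2 + cmod l^2 * R < cmod a^2"
proof -
  define X where "X = cmod x ^ 2"
  define A where "A = cmod a ^ 2"
  have X: "X > 0" and A: "A > 0" using assms by (auto simp: X_def A_def)
  define t where "t = X / (X + R)"
  have t: "t > 0" "t \<le> 1" using X assms(3) by (auto simp: t_def)
  define l where "l = - (of_real t * a / x)"
  have e1: "a + l*x = of_real (1 - t) * a" using assms(2) by (simp add: l_def field_simps)
  have e2: "cmod l ^2 = t^2 * A / X" by (simp add: l_def A_def X_def norm_divide norm_mult power_divide power_mult_distrib abs_of_nonneg t)
  have e3: "cmod (of_real (1 - t) * a) = (1 - t) * cmod a" proof -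
    have "cmod (of_real (1 - t)) = 1 - t" using t by (simp only: norm_of_real)
    then show ?thesis by (simp only: norm_mult)
  qed
  have "cmod (a + l*x)^2 + cmod l^2 * R = A * ((1-t)^2 + t^2 * R / X)"
    unfolding e1 e2 e3 using X by (simp add: power_mult_distrib A_def field_simps power2_eq_square)
  also have "(1-t)^2 + t^2 * R / X = R / (X + R)"
  proof -
    have XR: "X + R > 0" using X assms(3) by simp
    have "1 - t = R / (X + R)" using XR by (simp add: t_def field_simps)
    then have "(1-t)^2 + t^2 * R / X = R^2/(X+R)^2 + X * R / (X+R)^2"
      using X by (simp add: t_def power_divide power2_eq_square)
    also have "\<dots> = R * (R + X) / (X+R)^2" by (simp add: add_divide_distrib[symmetric] algebra_simps power2_eq_square)
    also have "\<dots> = R / (X + R)" using XR by (simp add: power2_eq_square add.commute)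
    finally show ?thesis .
  qed
  also have "A * (R / (X + R)) < A" using X A assms(3) by (simp add: field_simps)
  finally show ?thesis unfolding A_def by blast
qed

lemma one_neq_two2: "(1::2) \<noteq> 2" by simp

lemma rank_le1:
  fixes X :: "complex^2^2"
  assumes "rows X \<subseteq> vec.span {v}"
  shows "rank X \<le> 1"
proof -
  have "rank X = vec.dim (rows X)" by (simp add: row_rank_def_gen)
  also have "\<dots> \<le> vec.dim (vec.span {v})" by (rule vec.dim_subset[OF assms])
  also have "\<dots> = vec.dim {v}" by (rule vec.dim_span)
  also have "\<dots> \<le> 1" by (simp add: vec.dim_singleton)
  finally show ?thesis .
qed

lemma rows2: "rows (X::complex^2^2) = {row 1 X, row 2 X}"
  by (auto simp: rows_def UNIV_2)

lemma rank_det: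
  fixes X :: "complex^2^2"
  assumes "X$1$1 * X$2$2 - X$1$2 * X$2$1 \<noteq> 0"
  shows "rank X = 2"
proof -
  have r2: "row 2 X \<noteq> 0"
  proof
    assume "row 2 X = 0"
    then have "X$2$1 = 0" "X$2$2 = 0" by (auto simp: row_def vec_eq_iff)
    then show False using assms by simp
  qed
  have ns: "row 1 X \<notin> vec.span {row 2 X}"
  proof
    assume "row 1 X \<in> vec.span {row 2 X}"
    then obtain k where "row 1 X = k *s row 2 X" by (auto simp: vec.span_singleton)
    then have "X$1$1 = k * X$2$1" "X$1$2 = k * X$2$2" by (auto simp: row_def vec_eq_iff)
    then show False using assms by (simp add: algebra_simps)
  qed
  have ne: "row 1 X \<noteq> row 2 X" using ns vec.span_base[of "row 2 X" "{row 2 X}"] by auto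
  have ind: "vec.independent {row 1 X, row 2 X}"
    using ns r2 by (simp add: vec.independent_insert)
  have "rank X = vec.dim {row 1 X, row 2 X}" by (simp add: row_rank_def_gen rows2)
  also have "\<dots> = card {row 1 X, row 2 X}" by (rule vec.dim_eq_card_independent[OF ind])
  also have "\<dots> = 2" using ne by simp
  finally show ?thesis .
qed

lemma rank_nz:
  fixes X :: "complex^2^2"
  assumes "rank X = 1" shows "X \<noteq> 0"
proof
  assume "X = 0"
  then have "rows X \<subseteq> {0}" by (auto simp: rows_def row_def vec_eq_iff)
  then have d0: "vec.dim (rows X) = 0" using vec.dim_eq_0[of "rows X"] by blast
  have "rank X = vec.dim (rows X)" by (simp only: row_rank_def_gen)
  then show False using assms d0 by simp
qed

lemma low_e1:
  fixes M :: "complex^2^2"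
  shows "cmod (M$i$1) \<le> opnorm M"
proof -
  define e where "e = ((\<chi> j. if j = 1 then 1 else 0) :: complex^2)"
  have "norm e = 1" by (simp add: norm2 e_def)
  moreover have "(M *v e)$i = M$i$1" by (simp add: mv_comp e_def)
  ultimately show ?thesis using opnorm_lower_comp[of M e i] by simp
qed

lemma low_e2:
  fixes M :: "complex^2^2"
  shows "cmod (M$i$2) \<le> opnorm M"
proof -
  define e where "e = ((\<chi> j. if j = 1 then 0 else 1) :: complex^2)"
  have "norm e = 1" by (simp add: norm2 e_def)
  moreover have "(M *v e)$i = M$i$2" by (simp add: mv_comp e_def)
  ultimately show ?thesis using opnorm_lower_comp[of M e i] by simp
qed

lemma key_gen:
  fixes A X :: "complex^2^2" and a x :: complex and R :: real
  assumes orth: "bj_orth A X" and low: "cmod a \<le> opnorm A" and a: "a \<noteq> 0" and R: "R \<ge> 0"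
    and fe: "\<And>l. cmod ((A + cmat_scale l X)$1$1)^2 + cmod ((A + cmat_scale l X)$1$2)^2
        + cmod ((A + cmat_scale l X)$2$1)^2 + cmod ((A + cmat_scale l X)$2$2)^2
        = cmod (a + l*x)^2 + cmod l^2 * R"
  shows "x = 0"
proof (rule ccontr)
  assume "x \<noteq> 0"
  then obtain l where l: "cmod (a + l*x)^2 + cmod l^2 * R < cmod a^2" using core[OF a _ R] by blast
  have "opnorm (A + cmat_scale l X) \<le> sqrt (cmod (a + l*x)^2 + cmod l^2 * R)"
    using frob[of "A + cmat_scale l X"] fe[of l] by simp
  also have "\<dots> < sqrt (cmod a^2)" using l by (rule real_sqrt_less_mono)
  also have "\<dots> = cmod a" by simp
  also have "\<dots> \<le> opnorm A" by (rule low)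
  also have "\<dots> \<le> opnorm (A + cmat_scale l X)" using orth by (simp add: bj_orth_def)
  finally show False by simp
qed

lemma key11:
  assumes "bj_orth E11 X" shows "X$1$1 = 0"
proof (rule key_gen[OF assms, where a=1 and R="cmod (X$1$2)^2 + cmod (X$2$1)^2 + cmod (X$2$2)^2"])
  show "cmod 1 \<le> opnorm E11" using low_e1[of E11 1] by (simp add: E11_def)
  fix l
  show "cmod ((E11 + cmat_scale l X)$1$1)^2 + cmod ((E11 + cmat_scale l X)$1$2)^2
        + cmod ((E11 + cmat_scale l X)$2$1)^2 + cmod ((E11 + cmat_scale l X)$2$2)^2
        = cmod (1 + l * X$1$1)^2 + cmod l^2 * (cmod (X$1$2)^2 + cmod (X$2$1)^2 + cmod (X$2$2)^2)"
    by (simp add: E11_def cmat_scale_def norm_mult power_mult_distrib algebra_simps)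
qed auto

lemma key12:
  assumes "bj_orth (cmat_scale c E12) X" "c \<noteq> 0" shows "X$1$2 = 0"
proof (rule key_gen[OF assms(1), where a=c and R="cmod (X$1$1)^2 + cmod (X$2$1)^2 + cmod (X$2$2)^2"])
  show "cmod c \<le> opnorm (cmat_scale c E12)" using low_e2[of "cmat_scale c E12" 1] by (simp add: E12_def cmat_scale_def)
  fix l
  show "cmod ((cmat_scale c E12 + cmat_scale l X)$1$1)^2 + cmod ((cmat_scale c E12 + cmat_scale l X)$1$2)^2
        + cmod ((cmat_scale c E12 + cmat_scale l X)$2$1)^2 + cmod ((cmat_scale c E12 + cmat_scale l X)$2$2)^2
        = cmod (c + l * X$1$2)^2 + cmod l^2 * (cmod (X$1$1)^2 + cmod (X$2$1)^2 + cmod (X$2$2)^2)"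
    by (simp add: E12_def cmat_scale_def norm_mult power_mult_distrib algebra_simps)
qed (use assms in auto)

lemma key21:
  assumes "bj_orth (cmat_scale c E21) X" "c \<noteq> 0" shows "X$2$1 = 0"
proof (rule key_gen[OF assms(1), where a=c and R="cmod (X$1$1)^2 + cmod (X$1$2)^2 + cmod (X$2$2)^2"])
  show "cmod c \<le> opnorm (cmat_scale c E21)" using low_e1[of "cmat_scale c E21" 2] by (simp add: E21_def cmat_scale_def)
  fix l
  show "cmod ((cmat_scale c E21 + cmat_scale l X)$1$1)^2 + cmod ((cmat_scale c E21 + cmat_scale l X)$1$2)^2
        + cmod ((cmat_scale c E21 + cmat_scale l X)$2$1)^2 + cmod ((cmat_scale c E21 + cmat_scale l X)$2$2)^2
        = cmod (c + l * X$2$1)^2 + cmod l^2 * (cmod (X$1$1)^2 + cmod (X$1$2)^2 + cmod (X$2$2)^2)"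
    by (simp add: E21_def cmat_scale_def norm_mult power_mult_distrib algebra_simps)
qed (use assms in auto)

lemma opnorm_E11: "opnorm E11 \<le> 1"
  using frob[of E11] by (simp add: E11_def)

lemma orth_E11: assumes "X$1$1 = 0" shows "bj_orth E11 X"
  unfolding bj_orth_def
proof
  fix l
  have "1 \<le> opnorm (E11 + cmat_scale l X)"
    using low_e1[of "E11 + cmat_scale l X" 1] assms by (simp add: E11_def cmat_scale_def)
  then show "opnorm E11 \<le> opnorm (E11 + cmat_scale l X)" using opnorm_E11 by linarith
qed

lemma ident2:
  fixes p q l :: complex
  shows "cmod (p + l * cnj q)^2 + cmod (q - l * cnj p)^2 = (1 + cmod l^2) * (cmod p^2 + cmod q^2)"
  unfolding cmod_power2 by (simp add: power2_eq_square algebra_simps)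

lemma ident3:
  fixes p q :: complex
  shows "p * cnj p + q * cnj q = of_real (cmod p^2 + cmod q^2)"
proof -
  have "p * cnj p = of_real (cmod p^2)" "q * cnj q = of_real (cmod q^2)"
    by (simp_all only: complex_norm_square)
  then show ?thesis by simp
qed

lemma colcase:
  fixes B :: "complex^2^2"
  assumes b11: "B$1$1 = 0" and b21: "B$2$1 = 0" and b22: "B$2$2 \<noteq> 0"
  shows "\<exists>X \<in> bj_perp E11 \<inter> bj_perp B. \<not> rank X \<le> 1"
proof
  define X :: "complex^2^2" where "X = (\<chi> i j. if i = 1 then (if j = 1 then 0 else cnj (B$2$2))
      else (if j = 1 then 1 else - cnj (B$1$2)))"
  have X: "X$1$1 = 0" "X$1$2 = cnj (B$2$2)" "X$2$1 = 1" "X$2$2 = - cnj (B$1$2)"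
    by (simp_all add: X_def)
  have "rank X = 2" by (rule rank_det) (simp add: X b22)
  then show "\<not> rank X \<le> 1" by simp
  have "bj_orth E11 X" by (rule orth_E11) (simp add: X)
  moreover have "bj_orth B X"
    unfolding bj_orth_def
  proof
    fix l
    define M where "M = B + cmat_scale l X"
    define w where "w = sqrt (cmod (B$1$2)^2 + cmod (B$2$2)^2)"
    have "opnorm B \<le> w" using frob[of B] by (simp add: b11 b21 w_def)
    also have "w \<le> sqrt (cmod (M$1$2)^2 + cmod (M$2$2)^2)"
    proof -
      have "cmod (M$1$2)^2 + cmod (M$2$2)^2 = (1 + cmod l^2) * (cmod (B$1$2)^2 + cmod (B$2$2)^2)"
        using ident2[of "B$1$2" l "B$2$2"] by (simp add: M_def cmat_scale_def X b11 b21 algebra_simps)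
      moreover have "cmod (B$1$2)^2 + cmod (B$2$2)^2 \<ge> 0" by simp
      ultimately have "cmod (B$1$2)^2 + cmod (B$2$2)^2 \<le> cmod (M$1$2)^2 + cmod (M$2$2)^2"
        by (simp add: algebra_simps)
      then show ?thesis unfolding w_def by (rule real_sqrt_le_mono)
    qed
    also have "\<dots> \<le> opnorm M"
    proof -
      define e where "e = ((\<chi> j. if j = 1 then 0 else 1) :: complex^2)"
      have "norm e = 1" by (simp add: norm2 e_def)
      moreover have "norm (M *v e) = sqrt (cmod (M$1$2)^2 + cmod (M$2$2)^2)" by (simp add: mv_comp e_def norm2)
      ultimately show ?thesis using opnorm_lower[of M e] by simp
    qed
    finally show "opnorm B \<le> opnorm (B + cmat_scale l X)" by (simp add: M_def)
  qed
  ultimately show "X \<in> bj_perp E11 \<inter> bj_perp B" by (simp add: bj_perp_def)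
qed

lemma rowcase:
  fixes B :: "complex^2^2"
  assumes b11: "B$1$1 = 0" and b12: "B$1$2 = 0" and b22: "B$2$2 \<noteq> 0"
  shows "\<exists>X \<in> bj_perp E11 \<inter> bj_perp B. \<not> rank X \<le> 1"
proof
  define X :: "complex^2^2" where "X = (\<chi> i j. if i = 1 then (if j = 1 then 0 else 1)
      else (if j = 1 then cnj (B$2$2) else - cnj (B$2$1)))"
  have X: "X$1$1 = 0" "X$1$2 = 1" "X$2$1 = cnj (B$2$2)" "X$2$2 = - cnj (B$2$1)"
    by (simp_all add: X_def)
  have "rank X = 2" by (rule rank_det) (simp add: X b22)
  then show "\<not> rank X \<le> 1" by simp
  have "bj_orth E11 X" by (rule orth_E11) (simp add: X)
  moreover have "bj_orth B X"
    unfolding bj_orth_def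
  proof
    fix l
    define M where "M = B + cmat_scale l X"
    define w where "w = sqrt (cmod (B$2$1)^2 + cmod (B$2$2)^2)"
    have wpos: "w > 0" using b22 by (simp add: w_def add_nonneg_pos)
    have "opnorm B \<le> w" using frob[of B] by (simp add: b11 b12 w_def)
    also have "w \<le> opnorm M"
    proof -
      define v where "v = ((\<chi> j. if j = 1 then cnj (B$2$1) else cnj (B$2$2)) :: complex^2)"
      have nv: "norm v = w" by (simp add: norm2 v_def w_def)
      have "(M *v v)$2 = B$2$1 * cnj (B$2$1) + B$2$2 * cnj (B$2$2)"
        by (simp add: mv_comp v_def M_def cmat_scale_def X algebra_simps)
      also have "\<dots> = of_real (w^2)" unfolding ident3 w_def by simp
      finally have "(M *v v)$2 = of_real (w^2)" .
      then have "cmod ((M *v v)$2) = w^2" by (simp only: norm_of_real) simp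
      then have "w^2 \<le> opnorm M * w" using opnorm_lower_comp[of M v 2] nv by simp
      then show ?thesis using wpos by (simp add: power2_eq_square)
    qed
    finally show "opnorm B \<le> opnorm (B + cmat_scale l X)" by (simp add: M_def)
  qed
  ultimately show "X \<in> bj_perp E11 \<inter> bj_perp B" by (simp add: bj_perp_def)
qed

theorem lemma5p1:
  fixes B :: "complex^2^2"
  assumes "rank B = 1"
  shows "(bj_orth E11 B \<and> (\<forall>X \<in> bj_perp E11 \<inter> bj_perp B. rank X \<le> 1))
     \<longleftrightarrow> B \<in> (range (\<lambda>c. cmat_scale c E12) \<union> range (\<lambda>c. cmat_scale c E21)) - {0}"
proof
  assume L: "bj_orth E11 B \<and> (\<forall>X \<in> bj_perp E11 \<inter> bj_perp B. rank X \<le> 1)"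
  have b11: "B$1$1 = 0" using L key11 by blast
  have nz: "B \<noteq> 0" by (rule rank_nz[OF assms])
  have det: "B$1$1 * B$2$2 - B$1$2 * B$2$1 = 0" using rank_det[of B] assms by auto
  then have p: "B$1$2 = 0 \<or> B$2$1 = 0" using b11 by simp
  have b22: "B$2$2 = 0"
  proof (rule ccontr)
    assume "B$2$2 \<noteq> 0"
    then have "\<exists>X \<in> bj_perp E11 \<inter> bj_perp B. \<not> rank X \<le> 1"
      using p colcase[OF b11] rowcase[OF b11] by blast
    then show False using L by blast
  qed
  from p show "B \<in> (range (\<lambda>c. cmat_scale c E12) \<union> range (\<lambda>c. cmat_scale c E21)) - {0}"
  proof
    assume "B$1$2 = 0"
    then have "B = cmat_scale (B$2$1) E21"
      using b11 b22 by (simp add: vec_eq_iff forall_2 cmat_scale_def E21_def)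
    then show ?thesis using nz by blast
  next
    assume "B$2$1 = 0"
    then have "B = cmat_scale (B$1$2) E12"
      using b11 b22 by (simp add: vec_eq_iff forall_2 cmat_scale_def E12_def)
    then show ?thesis using nz by blast
  qed
next
  assume R: "B \<in> (range (\<lambda>c. cmat_scale c E12) \<union> range (\<lambda>c. cmat_scale c E21)) - {0}"
  then have nz: "B \<noteq> 0" by blast
  from R obtain c where "B = cmat_scale c E12 \<or> B = cmat_scale c E21" by blast
  then show "bj_orth E11 B \<and> (\<forall>X \<in> bj_perp E11 \<inter> bj_perp B. rank X \<le> 1)"
  proof
    assume B: "B = cmat_scale c E12"
    have c: "c \<noteq> 0" using nz B by (auto simp: cmat_scale_def E12_def vec_eq_iff)
    have "bj_orth E11 B" by (rule orth_E11) (simp add: B cmat_scale_def E12_def)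
    moreover have "rank X \<le> 1" if X: "X \<in> bj_perp E11 \<inter> bj_perp B" for X
    proof -
      have x11: "X$1$1 = 0" using X key11 by (auto simp: bj_perp_def)
      have x12: "X$1$2 = 0" using X key12[OF _ c] B by (auto simp: bj_perp_def)
      have "rows X \<subseteq> vec.span {row 2 X}"
      proof -
        have "row 1 X = 0" using x11 x12 by (simp add: row_def vec_eq_iff forall_2)
        then show ?thesis by (auto simp: rows2 vec.span_base vec.span_zero)
      qed
      then show ?thesis by (rule rank_le1)
    qed
    ultimately show ?thesis by blast
  next
    assume B: "B = cmat_scale c E21"
    have c: "c \<noteq> 0" using nz B by (auto simp: cmat_scale_def E21_def vec_eq_iff)
    have "bj_orth E11 B" by (rule orth_E11) (simp add: B cmat_scale_def E21_def)
    moreover have "rank X \<le> 1" if X: "X \<in> bj_perp E11 \<inter> bj_perp B" for X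
    proof -
      have x11: "X$1$1 = 0" using X key11 by (auto simp: bj_perp_def)
      have x21: "X$2$1 = 0" using X key21[OF _ c] B by (auto simp: bj_perp_def)
      define v where "v = ((\<chi> j. if j = 1 then 0 else 1) :: complex^2)"
      have "rows X \<subseteq> vec.span {v}"
      proof -
        have "\<forall>i. row i X = X$i$2 *s v"
          using x11 x21 by (auto simp: row_def vec_eq_iff forall_2 v_def)
        then show ?thesis by (auto simp: rows_def vec.span_singleton)
      qed
      then show ?thesis by (rule rank_le1)
    qed
    ultimately show ?thesis by blast
  qed
qed

end
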